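(* Let $N$ be a finite set with $|N|\ge 2$, let $o\in\mathbb{R}^{\Upsilon}$ be an SE objective and let $m\in\mathbb{R}^{\mathcal{S}}$ satisfy $o(a|B)=m(\{a\}\cup B)-m(B)$ for all $a\in N$, $B\subseteq N\setminus\{a\}$. Then for every $T\in\mathcal{S}$ and every $b\in T$, with $R=T\setminus\{b\}$, $$\sum_{\emptyset\neq K\subseteq R}(-1)^{|R\setminus K|}\, o(b|K)=\sum_{L\in\mathcal{S}:\,L\subseteq T}(-1)^{|T\setminus L|}\, m(L).$$ In particular, the left-hand side does not depend on the choice of $b\in T$.
   Context: $\mathrm{DAG}(N)$ is the set of acyclic directed graphs over $N$; $\mathrm{pa}_G(a)$ is the parent set of $a$ in $G$; $G\sim H$ (Markov equivalence) means same adjacencies and same immoralities. $\Upsilon=\{(a|B): a\in N,\ \emptyset\neq B\subseteq N\setminus\{a\}\}$; $\eta_G\in\mathbb{R}^{\Upsilon}$ has $\eta_G(a|B)=1$ if $B=\mathrm{pa}_G(a)$, else $0$. $o\in\mathbb{R}^{\Upsilon}$ is an SE objective if $\langle o,\eta_G\rangle=\langle o,\eta_H\rangle$ whenever $G\sim H$. $\mathcal{S}=\{S\subseteq N:|S|\ge 2\}$. Conventions: $o(b|\emptyset)=0$ for all $b\in N$, and $m(S)=0$ for $|S|\le 1$. *)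

theory Defs
  imports Complex_Main
begin

definition is_dag :: "'a set \<Rightarrow> ('a \<times> 'a) set \<Rightarrow> bool" where
  "is_dag N G \<longleftrightarrow> G \<subseteq> N \<times> N \<and> acyclic G"

definition pa :: "('a \<times> 'a) set \<Rightarrow> 'a \<Rightarrow> 'a set" where
  "pa G a = {b. (b, a) \<in> G}"

definition adj :: "('a \<times> 'a) set \<Rightarrow> 'a \<Rightarrow> 'a \<Rightarrow> bool" where
  "adj G x y \<longleftrightarrow> (x, y) \<in> G \<or> (y, x) \<in> G"

definition immoralities :: "('a \<times> 'a) set \<Rightarrow> ('a \<times> 'a \<times> 'a) set" where
  "immoralities G = {(a, c, b). (a, c) \<in> G \<and> (b, c) \<in> G \<and> a \<noteq> b \<and> \<not> adj G a b}"

definition markov_equiv :: "('a \<times> 'a) set \<Rightarrow> ('a \<times> 'a) set \<Rightarrow> bool" where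
  "markov_equiv G H \<longleftrightarrow> (\<forall>x y. adj G x y = adj H x y) \<and> immoralities G = immoralities H"

text \<open>o(a|B) for (a|B) in Upsilon; the convention o(b|{}) = 0.\<close>
definition o_ext :: "('a \<Rightarrow> 'a set \<Rightarrow> real) \<Rightarrow> 'a \<Rightarrow> 'a set \<Rightarrow> real" where
  "o_ext ob a B = (if B = {} then 0 else ob a B)"

text \<open>m on S = {S. |S| >= 2}; the convention m(S) = 0 for |S| <= 1.\<close>
definition m_ext :: "('a set \<Rightarrow> real) \<Rightarrow> 'a set \<Rightarrow> real" where
  "m_ext m S = (if 2 \<le> card S then m S else 0)"

text \<open>Inner product <o, eta_G>: only entries with nonempty parent set contribute.\<close>
definition score :: "'a set \<Rightarrow> ('a \<Rightarrow> 'a set \<Rightarrow> real) \<Rightarrow> ('a \<times> 'a) set \<Rightarrow> real" where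
  "score N ob G = (\<Sum>a\<in>N. o_ext ob a (pa G a))"

definition SE_objective :: "'a set \<Rightarrow> ('a \<Rightarrow> 'a set \<Rightarrow> real) \<Rightarrow> bool" where
  "SE_objective N ob \<longleftrightarrow>
     (\<forall>G H. is_dag N G \<and> is_dag N H \<and> markov_equiv G H \<longrightarrow> score N ob G = score N ob H)"

end

theory Submission
  imports Defs
begin

theorem corollary3:
  fixes N :: "'a set" and ob :: "'a \<Rightarrow> 'a set \<Rightarrow> real" and m :: "'a set \<Rightarrow> real"
  assumes "finite N" and "card N \<ge> 2"
    and "SE_objective N ob"
    and "\<forall>a\<in>N. \<forall>B. B \<subseteq> N - {a} \<longrightarrow> o_ext ob a B = m_ext m (insert a B) - m_ext m B"
    and "T \<subseteq> N" and "card T \<ge> 2" and "b \<in> T"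
  shows "(\<Sum>K\<in>{K. K \<subseteq> T - {b} \<and> K \<noteq> {}}. (-1::real) ^ card ((T - {b}) - K) * ob b K)
       = (\<Sum>L\<in>{L. L \<subseteq> T \<and> card L \<ge> 2}. (-1::real) ^ card (T - L) * m L)"
proof -
  define R where "R = T - {b}"
  have fT: "finite T" using assms(1,5) finite_subset by blast
  have fR: "finite R" using fT R_def by simp
  have bR: "b \<notin> R" using R_def by simp
  have bN: "b \<in> N" using assms(5,7) by blast
  define f where "f K = (-1::real) ^ card (R - K) * (m_ext m (insert b K) - m_ext m K)" for K
  have L1: "(\<Sum>K\<in>{K. K \<subseteq> T - {b} \<and> K \<noteq> {}}. (-1::real) ^ card ((T - {b}) - K) * ob b K)
      = (\<Sum>K\<in>{K. K \<subseteq> R \<and> K \<noteq> {}}. f K)"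
  proof (rule sum.cong)
    show "{K. K \<subseteq> T - {b} \<and> K \<noteq> {}} = {K. K \<subseteq> R \<and> K \<noteq> {}}" using R_def by simp
  next
    fix K assume "K \<in> {K. K \<subseteq> R \<and> K \<noteq> {}}"
    hence K: "K \<subseteq> R" "K \<noteq> {}" by auto
    have "K \<subseteq> N - {b}" using K assms(5) R_def by auto
    hence "o_ext ob b K = m_ext m (insert b K) - m_ext m K" using assms(4) bN by blast
    hence "ob b K = m_ext m (insert b K) - m_ext m K" using K by (simp add: o_ext_def)
    thus "(-1::real) ^ card ((T - {b}) - K) * ob b K = f K" unfolding f_def R_def by simp
  qed
  have L2: "(\<Sum>K\<in>{K. K \<subseteq> R \<and> K \<noteq> {}}. f K) = (\<Sum>K\<in>Pow R. f K)"
  proof (rule sum.mono_neutral_left)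
    show "finite (Pow R)" using fR by simp
    show "{K. K \<subseteq> R \<and> K \<noteq> {}} \<subseteq> Pow R" by auto
    show "\<forall>i\<in>Pow R - {K. K \<subseteq> R \<and> K \<noteq> {}}. f i = 0"
      by (auto simp: f_def m_ext_def)
  qed
  define g where "g L = (-1::real) ^ card (T - L) * m_ext m L" for L
  have R1: "(\<Sum>L\<in>{L. L \<subseteq> T \<and> card L \<ge> 2}. (-1::real) ^ card (T - L) * m L)
      = (\<Sum>L\<in>{L. L \<subseteq> T \<and> card L \<ge> 2}. g L)"
    by (rule sum.cong) (auto simp: g_def m_ext_def)
  have R2: "(\<Sum>L\<in>{L. L \<subseteq> T \<and> card L \<ge> 2}. g L) = (\<Sum>L\<in>Pow T. g L)"
  proof (rule sum.mono_neutral_left)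
    show "finite (Pow T)" using fT by simp
    show "{L. L \<subseteq> T \<and> card L \<ge> 2} \<subseteq> Pow T" by auto
    show "\<forall>i\<in>Pow T - {L. L \<subseteq> T \<and> card L \<ge> 2}. g i = 0"
      by (auto simp: g_def m_ext_def)
  qed
  have PT: "Pow T = Pow R \<union> insert b ` Pow R"
  proof
    show "Pow T \<subseteq> Pow R \<union> insert b ` Pow R"
    proof
      fix L assume "L \<in> Pow T"
      show "L \<in> Pow R \<union> insert b ` Pow R"
      proof (cases "b \<in> L")
        case True
        hence "L = insert b (L - {b})" by auto
        moreover have "L - {b} \<in> Pow R" using \<open>L \<in> Pow T\<close> R_def by auto
        ultimately show ?thesis by blast
      next
        case False thus ?thesis using \<open>L \<in> Pow T\<close> R_def by auto
      qed
    qed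
    show "Pow R \<union> insert b ` Pow R \<subseteq> Pow T" using R_def assms(7) by auto
  qed
  have disj: "Pow R \<inter> insert b ` Pow R = {}" using bR by auto
  have inj: "inj_on (insert b) (Pow R)"
    unfolding inj_on_def using bR by (metis PowD insert_ident subset_iff)
  have "(\<Sum>L\<in>Pow T. g L) = (\<Sum>L\<in>Pow R. g L) + (\<Sum>L\<in>insert b ` Pow R. g L)"
    unfolding PT using fR disj by (simp add: sum.union_disjoint)
  also have "(\<Sum>L\<in>insert b ` Pow R. g L) = (\<Sum>K\<in>Pow R. g (insert b K))"
    using inj by (simp add: sum.reindex)
  finally have G: "(\<Sum>L\<in>Pow T. g L) = (\<Sum>K\<in>Pow R. g K + g (insert b K))"
    by (simp add: sum.distrib)
  have "(\<Sum>K\<in>Pow R. f K) = (\<Sum>K\<in>Pow R. g K + g (insert b K))"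
  proof (rule sum.cong)
    fix K assume "K \<in> Pow R"
    hence K: "K \<subseteq> R" by auto
    have e1: "T - insert b K = R - K" using R_def by auto
    have e2: "T - K = insert b (R - K)" using R_def K assms(7) by auto
    have fin: "finite (R - K)" using fR by simp
    have c2: "card (T - K) = Suc (card (R - K))" using e2 fin bR by simp
    show "f K = g K + g (insert b K)"
      by (simp add: f_def g_def e1 c2 algebra_simps)
  qed simp
  thus ?thesis using L1 L2 R1 R2 G by simp
qed

end
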